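(* Let $L$ be a finite lattice, $\varphi\in M_1(L)$, and let $G$ be a tree whose vertex set is a nonempty subset of $L$. Then $\varphi(G)\le B_\varphi(\langle G\rangle^* )$, where $$\varphi(G)=\sum_{a\in G}\varphi(a)-\sum_{\{a,b\}\in E(G)}\varphi(a\vee b).$$
   Context: $L$ is a finite lattice with join $\vee$ and meet $\wedge$. A tree is a connected acyclic graph; $G$ also denotes its vertex set and $E(G)$ its edge set (unordered pairs of vertices). For $A\subseteq L$, $\langle A\rangle^*=\{x\in L: x\ge a\text{ for some }a\in A\}$. $\mathcal L$ is the set of nonempty up-sets of $L$, ordered by $U\preceq V$ iff $U\supseteq V$ (meet = union). $M_1(L)$ is the set of nonnegative monotone functions on $L$; $M_\infty(\mathcal L)$ is the set of nonnegative completely monotone functions on $(\mathcal L,\preceq)$ (all iterated differences $\nabla_{U}\Phi(W)=\Phi(W)-\Phi(W\wedge U)$ nonnegative). For $\varphi\in M_1(L)$ and $U\in\mathcal L$, $B_\varphi(U)=\min\{\Phi(U):\Phi\in M_\infty(\mathcal L),\ \Phi(\langle x\rangle^* )=\varphi(x)\ \forall x\in L\}$. *)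

theory Defs
  imports Complex_Main
begin

definition up_closure :: "'a::order set \<Rightarrow> 'a set" where
  "up_closure A = {x. \<exists>a\<in>A. a \<le> x}"

text \<open>Nonempty up-sets of L (the carrier of the lattice \<open>\<L>\<close>, ordered by reverse inclusion).\<close>
definition upsets :: "'a::order set set" where
  "upsets = {U. U \<noteq> {} \<and> (\<forall>x y. x \<in> U \<and> x \<le> y \<longrightarrow> y \<in> U)}"

definition M1 :: "('a::order \<Rightarrow> real) set" where
  "M1 = {\<phi>. mono \<phi> \<and> (\<forall>x. 0 \<le> \<phi> x)}"

text \<open>Iterated differences: nabla [U1,...,Uk] \<Phi> W = \<nabla>_{U1} ... \<nabla>_{Uk} \<Phi>(W),
  with \<nabla>_U \<Phi>(W) = \<Phi>(W) - \<Phi>(W \<and> U) and meet in \<L> being union.\<close>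
fun nabla :: "'a set list \<Rightarrow> ('a set \<Rightarrow> real) \<Rightarrow> 'a set \<Rightarrow> real" where
  "nabla [] \<Phi> W = \<Phi> W"
| "nabla (U # Us) \<Phi> W = nabla Us \<Phi> W - nabla Us \<Phi> (W \<union> U)"

text \<open>M_\<infinity>(\<L>): nonnegative completely monotone functions on \<L>
  (only their values on \<L> matter).\<close>
definition Minf :: "('a::order set \<Rightarrow> real) set" where
  "Minf = {\<Phi>. \<forall>Us W. set Us \<subseteq> upsets \<and> W \<in> upsets \<longrightarrow> 0 \<le> nabla Us \<Phi> W}"

text \<open>B_\<phi>(U) = min of \<Phi>(U) over completely monotone extensions of \<phi>;
  rendered as the infimum (which is the minimum when attained).\<close>
definition B :: "('a::order \<Rightarrow> real) \<Rightarrow> 'a set \<Rightarrow> real" where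
  "B \<phi> U = Inf {\<Phi> U | \<Phi>. \<Phi> \<in> Minf \<and> (\<forall>x. \<Phi> (up_closure {x}) = \<phi> x)}"

definition simple_graph :: "'a set \<Rightarrow> 'a set set \<Rightarrow> bool" where
  "simple_graph V E \<longleftrightarrow> finite V \<and> (\<forall>e\<in>E. \<exists>a b. a \<in> V \<and> b \<in> V \<and> a \<noteq> b \<and> e = {a, b})"

definition adj :: "'a set set \<Rightarrow> 'a \<Rightarrow> 'a \<Rightarrow> bool" where
  "adj E a b \<longleftrightarrow> {a, b} \<in> E"

definition connected_graph :: "'a set \<Rightarrow> 'a set set \<Rightarrow> bool" where
  "connected_graph V E \<longleftrightarrow> (\<forall>a\<in>V. \<forall>b\<in>V. (adj E)\<^sup>*\<^sup>* a b)"

definition is_cycle :: "'a set set \<Rightarrow> 'a list \<Rightarrow> bool" where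
  "is_cycle E vs \<longleftrightarrow> length vs \<ge> 3 \<and> distinct vs
     \<and> (\<forall>i. Suc i < length vs \<longrightarrow> adj E (vs ! i) (vs ! Suc i))
     \<and> adj E (last vs) (hd vs)"

definition acyclic_graph :: "'a set set \<Rightarrow> bool" where
  "acyclic_graph E \<longleftrightarrow> \<not> (\<exists>vs. is_cycle E vs)"

definition is_tree :: "'a set \<Rightarrow> 'a set set \<Rightarrow> bool" where
  "is_tree V E \<longleftrightarrow> simple_graph V E \<and> connected_graph V E \<and> acyclic_graph E"

text \<open>\<phi>(G) = \<Sum>_{a\<in>G} \<phi>(a) - \<Sum>_{{a,b}\<in>E(G)} \<phi>(a \<squnion> b); for e = {a,b}, Sup_fin e = a \<squnion> b.\<close>
definition phiG :: "('a::lattice \<Rightarrow> real) \<Rightarrow> 'a set \<Rightarrow> 'a set set \<Rightarrow> real" where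
  "phiG \<phi> V E = (\<Sum>a\<in>V. \<phi> a) - (\<Sum>e\<in>E. \<phi> (Sup_fin e))"

end

theory Submission
  imports Defs
begin

lemma nabla_min:
  assumes hm: "\<And>W U. \<Phi> (W \<union> U) = min (\<Phi> W) (\<Phi> U)"
  shows "nabla Us \<Phi> W = (if Us = [] then \<Phi> W else max 0 (\<Phi> W - Max (\<Phi> ` set Us)))"
proof (induction Us arbitrary: W)
  case Nil then show ?case by simp
next
  case (Cons U Us)
  show ?case
  proof (cases "Us = []")
    case True
    then show ?thesis using hm[of W U] by (simp add: max_def min_def)
  next
    case False
    define m where "m = Max (\<Phi> ` set Us)"
    have e1: "nabla Us \<Phi> W = max 0 (\<Phi> W - m)" using Cons False m_def by simp
    have e2: "nabla Us \<Phi> (W \<union> U) = max 0 (min (\<Phi> W) (\<Phi> U) - m)"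
      using Cons False m_def hm by simp
    have e3: "Max (\<Phi> ` set (U # Us)) = max (\<Phi> U) m"
      using False m_def by (simp add: Max_insert)
    show ?thesis using e1 e2 e3 by (simp add: max_def min_def)
  qed
qed

lemma exists_ext:
  fixes \<phi> :: "'a::{finite, lattice} \<Rightarrow> real"
  assumes "\<phi> \<in> M1"
  shows "\<exists>\<Phi>. \<Phi> \<in> Minf \<and> (\<forall>x. \<Phi> (up_closure {x}) = \<phi> x)"
proof -
  have mo: "mono \<phi>" and nn: "\<And>x. 0 \<le> \<phi> x" using assms by (auto simp: M1_def)
  define M where "M = Max (range \<phi>)"
  have Mge: "\<phi> x \<le> M" for x unfolding M_def by (rule Max_ge) auto
  define \<Phi> where "\<Phi> W = Min (insert M (\<phi> ` W))" for W
  have hm: "\<Phi> (W \<union> U) = min (\<Phi> W) (\<Phi> U)" for W U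
  proof -
    have "insert M (\<phi> ` (W \<union> U)) = insert M (\<phi> ` W) \<union> insert M (\<phi> ` U)" by auto
    moreover have "Min (insert M (\<phi> ` W) \<union> insert M (\<phi> ` U)) = min (Min (insert M (\<phi> ` W))) (Min (insert M (\<phi> ` U)))"
      by (rule Min_Un) auto
    ultimately show ?thesis unfolding \<Phi>_def by simp
  qed
  have pos: "0 \<le> \<Phi> W" for W
    unfolding \<Phi>_def using nn nn[of undefined] Mge[of undefined] by (subst Min_ge_iff) (auto intro: order_trans)
  have "\<Phi> \<in> Minf"
    unfolding Minf_def
  proof (intro CollectI allI impI)
    fix Us W show "0 \<le> nabla Us \<Phi> W" using nabla_min[of \<Phi> Us W, OF hm] pos[of W] by auto
  qed
  moreover have "\<Phi> (up_closure {x}) = \<phi> x" for x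
  proof -
    have "Min (insert M (\<phi> ` {y. x \<le> y})) = \<phi> x"
      by (rule Min_eqI) (auto simp: Mge intro: monoD[OF mo])
    then show ?thesis unfolding \<Phi>_def up_closure_def by simp
  qed
  ultimately show ?thesis by blast
qed

lemma up_upset: "A \<noteq> {} \<Longrightarrow> up_closure A \<in> upsets"
  unfolding up_closure_def upsets_def by (auto intro: order_trans)

lemma Minf_mono:
  assumes "\<Phi> \<in> Minf" "X \<in> upsets" "Y \<in> upsets" "Y \<subseteq> X"
  shows "\<Phi> X \<le> \<Phi> Y"
proof -
  have "set [X] \<subseteq> upsets \<and> Y \<in> upsets" using assms by simp
  then have "0 \<le> nabla [X] \<Phi> Y" using assms(1) unfolding Minf_def by blast
  moreover have "Y \<union> X = X" using assms(4) by auto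
  then have "nabla [X] \<Phi> Y = \<Phi> Y - \<Phi> X" by simp
  ultimately show ?thesis by simp
qed

lemma Minf_super:
  assumes "\<Phi> \<in> Minf" "A \<in> upsets" "L \<in> upsets" "A \<inter> L \<in> upsets"
  shows "\<Phi> A + \<Phi> L \<le> \<Phi> (A \<union> L) + \<Phi> (A \<inter> L)"
proof -
  have "set [A, L] \<subseteq> upsets \<and> A \<inter> L \<in> upsets" using assms by simp
  then have "0 \<le> nabla [A, L] \<Phi> (A \<inter> L)" using assms(1) unfolding Minf_def by blast
  moreover have "(A \<inter> L) \<union> L = L" "(A \<inter> L) \<union> A = A" "A \<inter> L \<union> A \<union> L = A \<union> L" by auto
  then have "nabla [A, L] \<Phi> (A \<inter> L) = (\<Phi> (A \<inter> L) - \<Phi> L) - (\<Phi> A - \<Phi> (A \<union> L))"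
    by (simp only: nabla.simps)
  ultimately show ?thesis by simp
qed

lemma crossing:
  assumes "(adj E)\<^sup>*\<^sup>* x z" "x \<in> S" "z \<notin> S"
  shows "\<exists>u v. adj E u v \<and> u \<in> S \<and> v \<notin> S"
  using assms by (induction rule: rtranclp_induct) auto

lemma grow:
  fixes \<phi> :: "'a::{finite, lattice} \<Rightarrow> real"
  assumes P: "\<Phi> \<in> Minf" and ext: "\<forall>x. \<Phi> (up_closure {x}) = \<phi> x"
    and V: "V \<noteq> {}" and tr: "is_tree V E"
  shows "\<exists>S F. S \<subseteq> V \<and> S \<noteq> {} \<and> F \<subseteq> E \<and> (\<forall>e\<in>F. e \<subseteq> S) \<and> min (Suc n) (card V) \<le> card S
     \<and> (\<Sum>a\<in>S. \<phi> a) - (\<Sum>e\<in>F. \<phi> (Sup_fin e)) \<le> \<Phi> (up_closure S)"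
proof (induction n)
  case 0
  obtain r where r: "r \<in> V" using V by auto
  have "card {r} \<ge> min (Suc 0) (card V)" by simp
  then show ?case using r ext by (intro exI[of _ "{r}"] exI[of _ "{}"]) auto
next
  case (Suc n)
  then obtain S F where S: "S \<subseteq> V" "S \<noteq> {}" "F \<subseteq> E" "\<forall>e\<in>F. e \<subseteq> S"
    "min (Suc n) (card V) \<le> card S"
    and ih: "(\<Sum>a\<in>S. \<phi> a) - (\<Sum>e\<in>F. \<phi> (Sup_fin e)) \<le> \<Phi> (up_closure S)" by blast
  show ?case
  proof (cases "S = V")
    case True
    then show ?thesis using S ih by (intro exI[of _ S] exI[of _ F]) auto
  next
    case False
    then obtain z where z: "z \<in> V" "z \<notin> S" using S by auto
    obtain x where x: "x \<in> S" using S by auto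
    have "(adj E)\<^sup>*\<^sup>* x z" using tr x z S unfolding is_tree_def connected_graph_def by auto
    then obtain a b where ab: "adj E a b" "a \<in> S" "b \<notin> S" using crossing x z by metis
    have eE: "{a, b} \<in> E" using ab by (simp add: adj_def)
    then obtain a' b' where "a' \<in> V" "b' \<in> V" "{a, b} = {a', b'}"
      using tr unfolding is_tree_def simple_graph_def by blast
    then have bV: "b \<in> V" by (auto simp: doubleton_eq_iff)
    define S' where "S' = insert b S"
    define F' where "F' = insert {a, b} F"
    have nF: "{a, b} \<notin> F" using S(4) ab by auto
    have cS: "card S' = Suc (card S)" unfolding S'_def using ab by simp
    have cV: "card S' \<le> card V" using S bV unfolding S'_def by (intro card_mono) auto
    let ?A = "up_closure S" and ?L = "up_closure {b}"
    have uS': "up_closure S' = ?A \<union> ?L" unfolding S'_def up_closure_def by auto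
    have sub: "up_closure {sup a b} \<subseteq> ?A \<inter> ?L" using ab unfolding up_closure_def
      by (auto intro: order_trans)
    have uA: "?A \<in> upsets" using S up_upset by blast
    have uL: "?L \<in> upsets" using up_upset by blast
    have uI: "?A \<inter> ?L \<in> upsets" unfolding upsets_def
    proof
      have "sup a b \<in> ?A \<inter> ?L" using sub unfolding up_closure_def by blast
      then show "?A \<inter> ?L \<noteq> {} \<and> (\<forall>x y. x \<in> ?A \<inter> ?L \<and> x \<le> y \<longrightarrow> y \<in> ?A \<inter> ?L)"
        unfolding up_closure_def by (auto intro: order_trans)
    qed
    have m1: "\<Phi> (?A \<inter> ?L) \<le> \<phi> (sup a b)"
      using Minf_mono[OF P uI up_upset sub] ext by simp
    have m2: "\<Phi> ?A + \<phi> b \<le> \<Phi> (?A \<union> ?L) + \<Phi> (?A \<inter> ?L)"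
      using Minf_super[OF P uA uL uI] ext by simp
    have sums: "(\<Sum>x\<in>S'. \<phi> x) - (\<Sum>e\<in>F'. \<phi> (Sup_fin e))
        = (\<Sum>x\<in>S. \<phi> x) - (\<Sum>e\<in>F. \<phi> (Sup_fin e)) + \<phi> b - \<phi> (sup a b)"
      unfolding S'_def F'_def using ab nF by simp
    show ?thesis
    proof (intro exI[of _ S'] exI[of _ F'] conjI)
      show "S' \<subseteq> V" using S bV unfolding S'_def by auto
      show "S' \<noteq> {}" unfolding S'_def by auto
      show "F' \<subseteq> E" using S eE unfolding F'_def by auto
      show "\<forall>e\<in>F'. e \<subseteq> S'" using S ab unfolding F'_def S'_def by auto
      show "min (Suc (Suc n)) (card V) \<le> card S'" using S(5) cS cV by linarith
      show "(\<Sum>x\<in>S'. \<phi> x) - (\<Sum>e\<in>F'. \<phi> (Sup_fin e)) \<le> \<Phi> (up_closure S')"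
        unfolding uS' using sums ih m1 m2 by linarith
    qed
  qed
qed

theorem lemma3p9:
  fixes \<phi> :: "'a::{finite, lattice} \<Rightarrow> real"
    and V :: "'a set" and E :: "'a set set"
  assumes "\<phi> \<in> M1"
    and "V \<noteq> {}"
    and "is_tree V E"
  shows "phiG \<phi> V E \<le> B \<phi> (up_closure V)"
proof -
  have nn: "\<And>x. 0 \<le> \<phi> x" using assms(1) by (auto simp: M1_def)
  have lb: "phiG \<phi> V E \<le> \<Phi> (up_closure V)"
    if P: "\<Phi> \<in> Minf" and ext: "\<forall>x. \<Phi> (up_closure {x}) = \<phi> x" for \<Phi>
  proof -
    obtain S F where S: "S \<subseteq> V" "F \<subseteq> E" "min (Suc (card V)) (card V) \<le> card S"
      and h: "(\<Sum>a\<in>S. \<phi> a) - (\<Sum>e\<in>F. \<phi> (Sup_fin e)) \<le> \<Phi> (up_closure S)"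
      using grow[OF P ext assms(2,3), of "card V"] by blast
    have "S = V" using S by (metis card_mono card_subset_eq finite le_antisym min_absorb2 le_SucI order_refl)
    moreover have "(\<Sum>e\<in>F. \<phi> (Sup_fin e)) \<le> (\<Sum>e\<in>E. \<phi> (Sup_fin e))"
      using S(2) nn by (intro sum_mono2) auto
    moreover from h have "(\<Sum>a\<in>V. \<phi> a) - (\<Sum>e\<in>F. \<phi> (Sup_fin e)) \<le> \<Phi> (up_closure V)"
      using \<open>S = V\<close> by simp
    ultimately show ?thesis unfolding phiG_def by linarith
  qed
  obtain \<Phi>0 where "\<Phi>0 \<in> Minf \<and> (\<forall>x. \<Phi>0 (up_closure {x}) = \<phi> x)"
    using exists_ext[OF assms(1)] by blast
  then have ne: "{\<Phi> (up_closure V) | \<Phi>. \<Phi> \<in> Minf \<and> (\<forall>x. \<Phi> (up_closure {x}) = \<phi> x)} \<noteq> {}"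
    by blast
  show ?thesis unfolding B_def
    by (rule cInf_greatest[OF ne]) (auto intro: lb)
qed

end
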